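(* For every positive integer $n$ there exist a $4$-dense $n$-element point set $P_n$ in the plane and a stacking order $f$ of $\mathcal{D}(P_n)$ such that $$\lim_{\varepsilon\to 0}\mathrm{vis}(\mathcal{D}(\varepsilon P_n),f)\ge n^{3/4},$$ where $f$ also denotes the corresponding stacking order of $\mathcal{D}(\varepsilon P_n)$.
   Context: For a point $p$ in the plane, $D(p)$ denotes the closed disk of radius $1$ centered at $p$, and for a finite point set $P$, $\mathcal{D}(P)=\{D(p): p\in P\}$. A stacking order of a finite collection $\mathcal{D}$ of $n$ distinct unit disks is a bijection $f:\mathcal{D}\to\{1,\dots,n\}$; $f(D)$ is regarded as the height of $D$, and the arrangement is viewed from below. A point $x$ on the boundary circle of $D\in\mathcal{D}$ is visible if $x$ does not lie in any disk $D'\in\mathcal{D}$ with $f(D')<f(D)$. The visible perimeter $\mathrm{vis}(\mathcal{D},f)$ is the total length of all visible boundary points, summed over all disks of $\mathcal{D}$. For $\varepsilon>0$, $\varepsilon P=\{(\varepsilon x,\varepsilon y): (x,y)\in P\}$, and a stacking order $f$ of $\mathcal{D}(P)$ is identified with the stacking order $D(\varepsilon p)\mapsto f(D(p))$ of $\mathcal{D}(\varepsilon P)$. An $n$-element point set $P$ is $C$-dense if $\max\{|pq|: p,q\in P\}\,/\,\min\{|pq|: p,q\in P,\ p\ne q\}\le C n^{1/2}$. *)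

theory Defs
  imports "HOL-Analysis.Analysis"
begin

definition unit_disk :: "complex \<Rightarrow> complex set" where
  "unit_disk p = cball p 1"

text \<open>A stacking order of the disks D(P) (disks are distinct iff centres are),
  viewed as a bijection from the centres onto {1..n}.\<close>
definition stacking_order :: "complex set \<Rightarrow> (complex \<Rightarrow> nat) \<Rightarrow> bool" where
  "stacking_order P f \<longleftrightarrow> finite P \<and> bij_betw f P {1..card P}"

text \<open>Visible perimeter: the boundary circle of D(p) is parametrised by arc length
  theta in [0, 2 pi) as p + cis theta; a boundary point is visible if it lies in no disk
  of smaller height.\<close>
definition vis :: "complex set \<Rightarrow> (complex \<Rightarrow> nat) \<Rightarrow> real" where
  "vis P f = (\<Sum>p\<in>P. measure lborel
      {\<theta>\<in>{0..<2*pi}. \<forall>q\<in>P. f q < f p \<longrightarrow> p + cis \<theta> \<notin> unit_disk q})"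

definition scale_set :: "real \<Rightarrow> complex set \<Rightarrow> complex set" where
  "scale_set \<epsilon> P = (\<lambda>p. complex_of_real \<epsilon> * p) ` P"

definition scale_order :: "real \<Rightarrow> (complex \<Rightarrow> nat) \<Rightarrow> (complex \<Rightarrow> nat)" where
  "scale_order \<epsilon> f = (\<lambda>z. f (z / complex_of_real \<epsilon>))"

text \<open>C-dense n-element point set (for n = 1 the ratio is undefined; condition vacuous).\<close>
definition dense :: "real \<Rightarrow> nat \<Rightarrow> complex set \<Rightarrow> bool" where
  "dense C n P \<longleftrightarrow> finite P \<and> card P = n \<and>
     (2 \<le> n \<longrightarrow>
       Max {dist p q | p q. p \<in> P \<and> q \<in> P} / Min {dist p q | p q. p \<in> P \<and> q \<in> P \<and> p \<noteq> q}
         \<le> C * sqrt (real n))"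

end

theory Submission
  imports Defs
begin


definition Vs :: "complex set \<Rightarrow> (complex \<Rightarrow> nat) \<Rightarrow> real \<Rightarrow> complex \<Rightarrow> real set" where
  "Vs P f e p = {\<theta>\<in>{0..<2*pi}. \<forall>q\<in>P. f q < f p \<longrightarrow>
      0 < 2 * (Re (p - q) * cos \<theta> + Im (p - q) * sin \<theta>) + e * ((Re (p-q))\<^sup>2 + (Im (p-q))\<^sup>2)}"

lemma notin_disk_iff:
  assumes "e > 0"
  shows "(e*p + cis \<theta> \<notin> unit_disk (e*q)) \<longleftrightarrow>
     0 < 2 * (Re (p - q) * cos \<theta> + Im (p - q) * sin \<theta>) + e * ((Re (p-q))\<^sup>2 + (Im (p-q))\<^sup>2)"
proof -
  have "(e*p + cis \<theta> \<notin> unit_disk (e*q)) \<longleftrightarrow> 1 < (dist (e*q) (e*p + cis \<theta>))\<^sup>2"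
    unfolding unit_disk_def mem_cball
    by (cases "dist (e*q) (e*p + cis \<theta>) \<le> 1") (auto simp: one_less_power dest: power_le_one[OF zero_le_dist, of _ _ 2])
  also have "(dist (e*q) (e*p + cis \<theta>))\<^sup>2 = (e * Re (p-q) + cos \<theta>)\<^sup>2 + (e * Im (p-q) + sin \<theta>)\<^sup>2"
  proof -
    have "dist (e*q) (e*p + cis \<theta>) = cmod (e*(p-q) + cis \<theta>)"
      by (simp add: dist_norm norm_minus_commute algebra_simps)
    then show ?thesis by (simp only: cmod_power2) (simp add: cis.sel)
  qed
  also have "\<dots> = 1 + e * (2 * (Re (p - q) * cos \<theta> + Im (p - q) * sin \<theta>) + e * ((Re (p-q))\<^sup>2 + (Im (p-q))\<^sup>2))"
    using sin_cos_squared_add[of \<theta>] by (simp add: power2_eq_square algebra_simps)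
  finally show ?thesis using assms by (simp add: zero_less_mult_iff)
qed

lemma vis_scaled:
  assumes "finite P" "e > 0"
  shows "vis (scale_set e P) (scale_order e f) = (\<Sum>p\<in>P. measure lborel (Vs P f e p))"
proof -
  have inj: "inj_on (\<lambda>p. complex_of_real e * p) P" using assms by (auto simp: inj_on_def)
  have fe: "\<And>z. scale_order e f (complex_of_real e * z) = f z" using assms by (simp add: scale_order_def)
  show ?thesis
    unfolding vis_def scale_set_def sum.reindex[OF inj] o_def
    by (rule sum.cong, simp, simp add: fe notin_disk_iff[OF assms(2)] Vs_def)
qed

lemma Vs_mono:
  assumes "0 < e1" "e1 \<le> e2" shows "Vs P f e1 p \<subseteq> Vs P f e2 p"
proof -
  have "\<And>a b. 0 < a + e1 * b \<Longrightarrow> 0 \<le> b \<Longrightarrow> 0 < a + e2 * b"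
    using assms by (smt (verit) mult_right_mono)
  then show ?thesis unfolding Vs_def by fastforce
qed

lemma Vs_sets: "Vs P f e p \<in> sets lborel" if "finite P"
proof -
  have "Vs P f e p = {0..<2*pi} \<inter> (\<Inter>q\<in>{q\<in>P. f q < f p}. {\<theta>. 0 < 2 * (Re (p - q) * cos \<theta> + Im (p - q) * sin \<theta>) + e * ((Re (p-q))\<^sup>2 + (Im (p-q))\<^sup>2)})"
    unfolding Vs_def by auto
  moreover have "open (\<Inter>q\<in>{q\<in>P. f q < f p}. {\<theta>::real. 0 < 2 * (Re (p - q) * cos \<theta> + Im (p - q) * sin \<theta>) + e * ((Re (p-q))\<^sup>2 + (Im (p-q))\<^sup>2)})"
    using that by (intro open_INT ballI open_Collect_less continuous_intros) auto
  ultimately show ?thesis by auto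
qed

lemma Vs_fmeas: "finite P \<Longrightarrow> Vs P f e p \<in> fmeasurable lborel"
proof -
  have "{0..2*pi} \<in> fmeasurable lborel" using fmeasurable_cbox[of 0 "2*pi"] by simp
  then show "finite P \<Longrightarrow> Vs P f e p \<in> fmeasurable lborel"
    by (rule fmeasurableI2) (auto simp: Vs_def Vs_sets)
qed

lemma limit_lb:
  assumes fin: "finite P"
  and iv: "\<forall>p\<in>P. lo p \<le> hi p \<and> {lo p<..<hi p} \<subseteq> {0..<2*pi} \<and>
     (\<forall>\<theta>. lo p < \<theta> \<and> \<theta> < hi p \<longrightarrow> (\<forall>q\<in>P. f q < f p \<longrightarrow> 0 < Re (p - q) * cos \<theta> + Im (p - q) * sin \<theta>))"
  shows "\<exists>L. ((\<lambda>e. vis (scale_set e P) (scale_order e f)) \<longlongrightarrow> L) (at_right 0) \<and> (\<Sum>p\<in>P. hi p - lo p) \<le> L"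
proof -
  define g where "g e = (\<Sum>p\<in>P. measure lborel (Vs P f e p))" for e
  have gv: "\<And>e. e > 0 \<Longrightarrow> vis (scale_set e P) (scale_order e f) = g e"
    using vis_scaled[OF fin] g_def by auto
  have gmono: "g e1 \<le> g e2" if "0 < e1" "e1 \<le> e2" for e1 e2
    unfolding g_def
    by (intro sum_mono measure_mono_fmeasurable Vs_mono that Vs_sets fin Vs_fmeas)
  have glb: "(\<Sum>p\<in>P. hi p - lo p) \<le> g e" if "e > 0" for e
    unfolding g_def
  proof (intro sum_mono)
    fix p assume p: "p \<in> P"
    have sub: "{lo p<..<hi p} \<subseteq> Vs P f e p"
    proof
      fix \<theta> assume th: "\<theta> \<in> {lo p<..<hi p}"
      have "\<forall>q\<in>P. f q < f p \<longrightarrow> 0 < Re (p - q) * cos \<theta> + Im (p - q) * sin \<theta>"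
        using iv p th by auto
      moreover have "\<And>q. 0 \<le> e * ((Re (p-q))\<^sup>2 + (Im (p-q))\<^sup>2)" using that by simp
      ultimately show "\<theta> \<in> Vs P f e p" unfolding Vs_def using iv p th
        by (smt (verit, best) mem_Collect_eq subsetD)
    qed
    have "hi p - lo p = measure lborel {lo p<..<hi p}" using iv p by simp
    also have "\<dots> \<le> measure lborel (Vs P f e p)"
      by (intro measure_mono_fmeasurable sub Vs_fmeas fin) simp
    finally show "hi p - lo p \<le> measure lborel (Vs P f e p)" .
  qed
  define L where "L = Inf (g ` {0<..})"
  have bdd: "bdd_below (g ` {0<..})" using glb by (auto intro!: bdd_belowI)
  have ne: "g ` {0<..} \<noteq> {}" by auto
  have Lle: "L \<le> g e" if "e > 0" for e unfolding L_def using bdd that by (auto intro!: cInf_lower)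
  have "(\<Sum>p\<in>P. hi p - lo p) \<le> L" unfolding L_def using glb ne by (auto intro!: cInf_greatest)
  moreover have "(g \<longlongrightarrow> L) (at_right 0)"
  proof (rule order_tendstoI)
    fix y assume "y < L"
    then show "eventually (\<lambda>e. y < g e) (at_right 0)"
      unfolding eventually_at_right_field using Lle by (intro exI[of _ 1]) force
  next
    fix y assume "L < y"
    then obtain e0 where e0: "e0 > 0" "g e0 < y" unfolding L_def using cInf_less_iff[OF ne bdd] by auto
    then show "eventually (\<lambda>e. g e < y) (at_right 0)"
      unfolding eventually_at_right_field using gmono by (intro exI[of _ e0]) (smt (verit))
  qed
  then have "((\<lambda>e. vis (scale_set e P) (scale_order e f)) \<longlongrightarrow> L) (at_right 0)"
    by (rule Lim_transform_eventually) (auto simp: eventually_at_right_field gv intro!: exI[of _ 1])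
  ultimately show ?thesis by blast
qed



definition Wd :: "nat \<Rightarrow> nat" where "Wd s = 2 * s^2 + 1"
definition aa :: "nat \<Rightarrow> real" where "aa s = 1/(4*(real s)^2)"
definition Xc :: "nat \<Rightarrow> nat \<Rightarrow> real" where "Xc s k = real (k mod Wd s) - real (s^2)"
definition Yc :: "nat \<Rightarrow> nat \<Rightarrow> real" where "Yc s k = real (k div Wd s) - aa s * (Xc s k)^2"
definition pt :: "nat \<Rightarrow> nat \<Rightarrow> complex" where "pt s k = Complex (Xc s k) (Yc s k)"
definition shi :: "nat \<Rightarrow> nat \<Rightarrow> real" where "shi s k = aa s - 2 * aa s * Xc s k"
definition slo :: "nat \<Rightarrow> nat \<Rightarrow> real" where "slo s k = - 1 / real s - 2 * aa s * Xc s k"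

lemma Wd_pos: "0 < Wd s" by (simp add: Wd_def)

lemma Xc_bound: "\<bar>Xc s k\<bar> \<le> real (s^2)"
proof -
  have "k mod Wd s < 2 * s^2 + 1" using Wd_pos[of s] by (simp add: Wd_def)
  then have "real (k mod Wd s) \<le> 2 * real (s^2)" by linarith
  then show ?thesis unfolding Xc_def by simp
qed

lemma aa_s2: "s \<ge> 1 \<Longrightarrow> aa s * real (s^2) = 1/4" by (simp add: aa_def)

lemma twoaX: assumes "s \<ge> 1" shows "\<bar>2 * aa s * Xc s k\<bar> \<le> 1/2"
proof -
  have "aa s > 0" using assms by (simp add: aa_def)
  then have "\<bar>2 * aa s * Xc s k\<bar> = 2 * aa s * \<bar>Xc s k\<bar>" by (simp add: abs_mult)
  also have "\<dots> \<le> 2 * aa s * real (s^2)" using Xc_bound \<open>aa s > 0\<close> by simp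
  finally show ?thesis using aa_s2[OF assms] by simp
qed

lemma key:
  assumes s: "s \<ge> 1" and kk: "k' < k" and sh: "\<sigma> < shi s k"
    and sl: "Wd s \<le> k \<Longrightarrow> slo s k < \<sigma>"
  shows "0 < (Yc s k - Yc s k') - \<sigma> * (Xc s k - Xc s k')"
proof -
  define a where "a = aa s"
  define x where "x = Xc s k"
  define x' where "x' = Xc s k'"
  define \<tau> where "\<tau> = \<sigma> + 2*a*x"
  define d where "d = x' - x"
  define j where "j = k div Wd s"
  define j' where "j' = k' div Wd s"
  have ap: "a = 1/(4*(real s)^2)" by (simp add: a_def aa_def)
  have spos: "real s > 0" using s by simp
  have id: "(Yc s k - Yc s k') - \<sigma> * (Xc s k - Xc s k') = (real j - real j') + a*d^2 + \<tau>*d"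
    unfolding Yc_def a_def[symmetric] x_def[symmetric] x'_def[symmetric] j_def j'_def \<tau>_def d_def
    by (simp add: power2_eq_square algebra_simps)
  have taua: "\<tau> < a" using sh by (simp add: \<tau>_def shi_def a_def x_def)
  have jj: "j' \<le> j" unfolding j_def j'_def using kk by (simp add: div_le_mono)
  show ?thesis
  proof (cases "j' < j")
    case True
    then have "Wd s \<le> k" unfolding j_def
      by (metis div_less le_less_linear less_nat_zero_code)
    then have "slo s k < \<sigma>" by (rule sl)
    then have tl: "-1/real s < \<tau>" by (simp add: \<tau>_def slo_def a_def x_def)
    have "a \<le> 1/real s" unfolding ap using s
      by (simp add: field_simps power2_eq_square)
    define u where "u = real s * \<tau>"
    have m1: "\<tau> * real s < a * real s" by (rule mult_strict_right_mono[OF taua spos])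
    have m2: "a * real s \<le> 1" using \<open>a \<le> 1/real s\<close> spos by (simp add: field_simps)
    have u1: "u < 1" using m1 m2 unfolding u_def by (simp add: mult.commute)
    have u2: "-1 < u" using tl spos unfolding u_def by (simp add: field_simps)
    have "u^2 < 1" using u1 u2 by (simp add: abs_square_less_1)
    have "4*(real s)^2 * (a*d^2 + \<tau>*d + 1) = (d + 2*real s*u)^2 + 4*(real s)^2*(1 - u^2)"
      unfolding ap u_def using spos by (simp add: power2_eq_square field_simps)
    moreover have "0 < (d + 2*real s*u)^2 + 4*(real s)^2*(1 - u^2)"
      using \<open>u^2 < 1\<close> spos by (simp add: add_nonneg_pos)
    ultimately have "0 < a*d^2 + \<tau>*d + 1" using spos
      by (metis zero_less_mult_pos zero_less_power mult_pos_pos zero_less_numeral)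
    moreover have "1 \<le> real j - real j'" using True by linarith
    ultimately show ?thesis using id by linarith
  next
    case False
    then have jeq: "j' = j" using jj by simp
    have "k' mod Wd s < k mod Wd s"
    proof -
      have "k' = Wd s * j' + k' mod Wd s" unfolding j'_def by simp
      moreover have "k = Wd s * j + k mod Wd s" unfolding j_def by simp
      ultimately show ?thesis using kk jeq by (metis add_less_cancel_left)
    qed
    then have "d \<le> -1" unfolding d_def x_def x'_def Xc_def by simp
    have "a > 0" unfolding ap using spos by simp
    have "a*d \<le> a*(-1)" using \<open>d \<le> -1\<close> \<open>a > 0\<close> by (intro mult_left_mono) auto
    then have "a*d + \<tau> < 0" using taua by simp
    then have "0 < d * (a*d + \<tau>)" using \<open>d \<le> -1\<close> by (intro mult_neg_neg) auto
    then have "0 < a*d^2 + \<tau>*d" by (simp add: power2_eq_square algebra_simps)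
    then show ?thesis using id jeq by simp
  qed
qed

lemma aa_le: assumes "s \<ge> 1" shows "aa s \<le> 1 / real s"
proof -
  have s1: "1 \<le> real s" using assms by simp
  have "real s * 1 \<le> real s * real s" using s1 by (intro mult_left_mono) auto
  then have "real s \<le> 4*(real s)^2" by (simp add: power2_eq_square)
  then show ?thesis unfolding aa_def using s1 by (intro frac_le) auto
qed

definition lo :: "nat \<Rightarrow> nat \<Rightarrow> real" where
  "lo s k = (if k < Wd s then 0 else pi/2 + arctan (slo s k))"
definition hi :: "nat \<Rightarrow> nat \<Rightarrow> real" where
  "hi s k = pi/2 + arctan (shi s k)"

lemma dir:
  assumes "-(pi/2) < \<phi>" "\<phi> < pi/2" and h: "0 < B - tan \<phi> * A"
  shows "0 < A * cos (\<phi> + pi/2) + B * sin (\<phi> + pi/2)"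
proof -
  have c: "0 < cos \<phi>" using assms by (intro cos_gt_zero_pi) auto
  have e1: "cos (\<phi> + pi/2) = - sin \<phi>" by (simp add: cos_add)
  have e2: "sin (\<phi> + pi/2) = cos \<phi>" by (simp add: sin_add)
  have "A * cos (\<phi> + pi/2) + B * sin (\<phi> + pi/2) = cos \<phi> * (B - tan \<phi> * A)"
    unfolding e1 e2 using c by (simp add: tan_def field_simps)
  then show ?thesis using c h by simp
qed

lemma pt_dir:
  assumes s: "s \<ge> 1" and kk: "k' < k" and th: "lo s k < \<theta>" "\<theta> < hi s k"
  shows "0 < Re (pt s k - pt s k') * cos \<theta> + Im (pt s k - pt s k') * sin \<theta>"
proof -
  define \<phi> where "\<phi> = \<theta> - pi/2"
  have th': "\<theta> = \<phi> + pi/2" by (simp add: \<phi>_def)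
  have b1: "\<phi> < arctan (shi s k)" using th by (simp add: \<phi>_def hi_def)
  have b2: "-(pi/2) < \<phi>"
    using th arctan_bounded[of "slo s k"] by (auto simp: \<phi>_def lo_def split: if_splits)
  have b3: "\<phi> < pi/2" using b1 arctan_bounded[of "shi s k"] by simp
  have at: "arctan (tan \<phi>) = \<phi>" using b2 b3 by (rule arctan_tan)
  have sh: "tan \<phi> < shi s k" using b1 at arctan_less_iff by metis
  have sl: "slo s k < tan \<phi>" if "Wd s \<le> k"
  proof -
    have "arctan (slo s k) < \<phi>" using th that by (simp add: \<phi>_def lo_def)
    then show ?thesis using at arctan_less_iff by metis
  qed
  have "0 < (Yc s k - Yc s k') - tan \<phi> * (Xc s k - Xc s k')"
    by (rule key[OF s kk sh sl])
  then show ?thesis unfolding th' using dir[OF b2 b3] by (simp add: pt_def)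
qed

lemma lo_hi:
  assumes "s \<ge> 1" shows "0 \<le> lo s k" "lo s k \<le> hi s k" "hi s k < 2*pi"
proof -
  have sp: "real s > 0" using assms by simp
  show "0 \<le> lo s k" using arctan_bounded[of "slo s k"] by (simp add: lo_def)
  have "0 \<le> aa s" "0 \<le> 1/real s" using sp by (auto simp: aa_def)
  then have "slo s k \<le> shi s k" unfolding slo_def shi_def by linarith
  then have "arctan (slo s k) \<le> arctan (shi s k)" by (simp add: arctan_le_iff)
  then show "lo s k \<le> hi s k" using arctan_bounded[of "shi s k"] by (simp add: lo_def hi_def)
  show "hi s k < 2*pi" using arctan_bounded[of "shi s k"] pi_gt_zero by (simp add: hi_def)
qed

lemma arctan_diff_lb:
  fixes u v M :: real
  assumes "u < v" "\<bar>u\<bar> \<le> M" "\<bar>v\<bar> \<le> M"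
  shows "(v - u) / (1 + M^2) \<le> arctan v - arctan u"
proof -
  obtain z where z: "u < z" "z < v" "arctan v - arctan u = (v - u) * inverse (1 + z^2)"
    using MVT2[OF assms(1), of arctan "\<lambda>x. inverse (1 + x^2)"] DERIV_arctan by blast
  have "\<bar>z\<bar> \<le> M" using z assms by linarith
  then have "\<bar>z\<bar>^2 \<le> M^2" by (intro power_mono) auto
  then have "z^2 \<le> M^2" by simp
  then have "inverse (1 + M^2) \<le> inverse (1 + z^2)"
    by (intro le_imp_inverse_le) (auto simp: add_pos_nonneg)
  then show ?thesis using z assms(1) by (simp add: divide_inverse mult_left_mono)
qed

definition cc :: "nat \<Rightarrow> real" where "cc s = (aa s + 1/real s) / (1 + (1/2 + 1/real s)^2)"

lemma width_row:
  assumes s: "s \<ge> 1" and k: "Wd s \<le> k" shows "cc s \<le> hi s k - lo s k"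
proof -
  have sp: "real s > 0" using s by simp
  have t: "\<bar>2 * aa s * Xc s k\<bar> \<le> 1/2" by (rule twoaX[OF s])
  have ap: "0 < aa s" "aa s \<le> 1 / real s" using aa_le[OF s] sp by (auto simp: aa_def)
  have "cc s \<le> arctan (shi s k) - arctan (slo s k)"
    unfolding cc_def
  proof -
    have "(shi s k - slo s k) / (1 + (1/2 + 1/real s)^2) \<le> arctan (shi s k) - arctan (slo s k)"
      by (rule arctan_diff_lb) (use t ap sp in \<open>auto simp: shi_def slo_def abs_le_iff\<close>)
    moreover have "shi s k - slo s k = aa s + 1/real s" by (simp add: shi_def slo_def)
    ultimately show "(aa s + 1 / real s) / (1 + (1 / 2 + 1 / real s)\<^sup>2) \<le> arctan (shi s k) - arctan (slo s k)"
      by simp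
  qed
  then show ?thesis using k by (simp add: lo_def hi_def)
qed

lemma width_first:
  assumes s: "s \<ge> 1" and k: "k < Wd s" shows "107/100 \<le> hi s k - lo s k"
proof -
  have t: "\<bar>2 * aa s * Xc s k\<bar> \<le> 1/2" by (rule twoaX[OF s])
  have "0 \<le> aa s" by (simp add: aa_def)
  then have "-(1/2) \<le> shi s k" using t by (simp add: shi_def abs_le_iff)
  then have "arctan (-(1/2)) \<le> arctan (shi s k)" by (simp add: arctan_le_iff)
  moreover have "arctan (1/2) \<le> 1/2" by (rule arctan_le_self) simp
  ultimately have "-(1/2) \<le> arctan (shi s k)" by (simp add: arctan_minus)
  then show ?thesis using k pi_approx by (simp add: lo_def hi_def)
qed



lemma pt_inj: "inj (pt s)"
proof (rule injI)
  fix k k' assume h: "pt s k = pt s k'"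
  then have x: "Xc s k = Xc s k'" and y: "Yc s k = Yc s k'" by (auto simp: pt_def)
  from x have m: "k mod Wd s = k' mod Wd s" by (simp add: Xc_def)
  from y x have "k div Wd s = k' div Wd s" by (simp add: Yc_def)
  with m show "k = k'" by (metis div_mult_mod_eq)
qed

lemma dist_ge1: assumes "k \<noteq> k'" shows "1 \<le> dist (pt s k) (pt s k')"
proof (cases "k mod Wd s = k' mod Wd s")
  case True
  then have "k div Wd s \<noteq> k' div Wd s" using assms by (metis div_mult_mod_eq)
  then have "1 \<le> \<bar>real (k div Wd s) - real (k' div Wd s)\<bar>" by linarith
  also have "\<dots> = \<bar>Im (pt s k - pt s k')\<bar>" using True by (simp add: pt_def Yc_def Xc_def)
  also have "\<dots> \<le> dist (pt s k) (pt s k')" using abs_Im_le_cmod[of "pt s k - pt s k'"] by (simp add: dist_norm)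
  finally show ?thesis .
next
  case False
  then have "1 \<le> \<bar>real (k mod Wd s) - real (k' mod Wd s)\<bar>" by linarith
  also have "\<dots> = \<bar>Re (pt s k - pt s k')\<bar>" by (simp add: pt_def Xc_def)
  also have "\<dots> \<le> dist (pt s k) (pt s k')" using abs_Re_le_cmod[of "pt s k - pt s k'"] by (simp add: dist_norm)
  finally show ?thesis .
qed

definition DX :: "nat \<Rightarrow> nat \<Rightarrow> real" where "DX s n = real (min (n - 1) (2 * s^2))"
definition DY :: "nat \<Rightarrow> nat \<Rightarrow> real" where "DY s n = real ((n - 1) div Wd s) + real (s^2) / 4"

lemma dist_le:
  assumes s: "s \<ge> 1" and k: "k < n" "k' < n"
  shows "dist (pt s k) (pt s k') \<le> sqrt ((DX s n)^2 + (DY s n)^2)"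
proof -
  have xb: "\<bar>Xc s k - Xc s k'\<bar> \<le> DX s n"
  proof -
    have "k mod Wd s \<le> min (n - 1) (2 * s^2)" "k' mod Wd s \<le> min (n - 1) (2 * s^2)"
      using k Wd_pos[of s] mod_less_divisor[of "Wd s"] mod_less_eq_dividend[of k "Wd s"] mod_less_eq_dividend[of k' "Wd s"]
      unfolding Wd_def by (auto simp: less_Suc_eq_le simp del: mod_less_eq_dividend)
    then show ?thesis unfolding Xc_def DX_def by linarith
  qed
  have yb: "-(real (s^2)/4) \<le> Yc s j \<and> Yc s j \<le> real ((n - 1) div Wd s)" if "j < n" for j
  proof -
    have "0 \<le> aa s" by (simp add: aa_def)
    have "(Xc s j)^2 \<le> (real (s^2))^2" using Xc_bound[of s j]
      by (metis abs_le_square_iff abs_of_nat of_nat_power)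
    then have "aa s * (Xc s j)^2 \<le> aa s * (real (s^2))^2" using \<open>0 \<le> aa s\<close> by (rule mult_left_mono)
    also have "\<dots> = real (s^2)/4" using s by (simp add: aa_def power2_eq_square field_simps)
    finally have a1: "aa s * (Xc s j)^2 \<le> real (s^2)/4" .
    have a2: "0 \<le> aa s * (Xc s j)^2" using \<open>0 \<le> aa s\<close> by simp
    have "j div Wd s \<le> (n - 1) div Wd s" using that by (intro div_le_mono) simp
    then have "real (j div Wd s) \<le> real ((n - 1) div Wd s)" by (simp only: of_nat_le_iff)
    then show ?thesis using a1 a2 unfolding Yc_def by linarith
  qed
  have ybb: "\<bar>Yc s k - Yc s k'\<bar> \<le> DY s n" using yb[OF k(1)] yb[OF k(2)] unfolding DY_def by linarith
  have "dist (pt s k) (pt s k') = sqrt ((Xc s k - Xc s k')^2 + (Yc s k - Yc s k')^2)"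
    by (simp add: dist_norm cmod_def pt_def)
  also have "\<dots> \<le> sqrt ((DX s n)^2 + (DY s n)^2)"
  proof (intro real_sqrt_le_mono add_mono)
    show "(Xc s k - Xc s k')^2 \<le> (DX s n)^2" using xb by (metis abs_le_square_iff power2_abs abs_idempotent abs_of_nonneg order.trans abs_ge_zero)
    show "(Yc s k - Yc s k')^2 \<le> (DY s n)^2" using ybb by (metis abs_le_square_iff power2_abs abs_idempotent abs_of_nonneg order.trans abs_ge_zero)
  qed
  finally show ?thesis .
qed

lemma sum_lb:
  assumes s: "s \<ge> 1"
  shows "(if n \<le> Wd s then 107/100 * real n else 107/100 * real (Wd s) + cc s * (real n - real (Wd s)))
          \<le> (\<Sum>k<n. hi s k - lo s k)"
proof (cases "n \<le> Wd s")
  case True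
  have "(\<Sum>k<n. (107/100::real)) \<le> (\<Sum>k<n. hi s k - lo s k)"
    using True by (intro sum_mono width_first[OF s]) auto
  then show ?thesis using True by simp
next
  case False
  have sp: "{..<n} = {..<Wd s} \<union> {Wd s..<n}" using False by auto
  have "(\<Sum>k<n. hi s k - lo s k) = (\<Sum>k<Wd s. hi s k - lo s k) + (\<Sum>k\<in>{Wd s..<n}. hi s k - lo s k)"
    unfolding sp by (rule sum.union_disjoint) auto
  moreover have "(\<Sum>k<Wd s. (107/100::real)) \<le> (\<Sum>k<Wd s. hi s k - lo s k)"
    by (intro sum_mono width_first[OF s]) auto
  moreover have "(\<Sum>k\<in>{Wd s..<n}. cc s) \<le> (\<Sum>k\<in>{Wd s..<n}. hi s k - lo s k)"
    by (intro sum_mono width_row[OF s]) auto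
  ultimately show ?thesis using False by (simp add: of_nat_diff mult.commute)
qed

lemma config:
  assumes s: "s \<ge> 1" and n: "n \<ge> 1"
    and dens: "2 \<le> n \<Longrightarrow> (DX s n)^2 + (DY s n)^2 \<le> 16 * real n"
    and tot: "real n powr (3/4) \<le> (\<Sum>k<n. hi s k - lo s k)"
  shows "\<exists>P f. dense 4 n P \<and> stacking_order P f \<and>
           (\<exists>L. ((\<lambda>\<epsilon>. vis (scale_set \<epsilon> P) (scale_order \<epsilon> f)) \<longlongrightarrow> L) (at_right 0)
                \<and> L \<ge> real n powr (3/4))"
proof -
  define P where "P = pt s ` {..<n}"
  define idx where "idx z = the_inv_into {..<n} (pt s) z" for z
  define f where "f z = idx z + 1" for z
  have inj: "inj_on (pt s) {..<n}" using pt_inj by (auto intro: inj_on_subset)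
  have idx: "\<And>k. k < n \<Longrightarrow> idx (pt s k) = k" unfolding idx_def using inj by (simp add: the_inv_into_f_f)
  have fin: "finite P" unfolding P_def by simp
  have card: "card P = n" unfolding P_def using inj by (simp add: card_image)
  have so: "stacking_order P f"
    unfolding stacking_order_def card
  proof (intro conjI fin bij_betw_imageI)
    show "inj_on f P" unfolding P_def inj_on_def f_def using idx by auto
    show "f ` P = {1..n}"
    proof
      show "f ` P \<subseteq> {1..n}" unfolding P_def f_def using idx by auto
      show "{1..n} \<subseteq> f ` P"
      proof
        fix x assume "x \<in> {1..n}"
        then have "x - 1 < n" "x = f (pt s (x - 1))" using idx unfolding f_def by auto
        then show "x \<in> f ` P" unfolding P_def by blast
      qed
    qed
  qed
  have lim: "\<exists>L. ((\<lambda>e. vis (scale_set e P) (scale_order e f)) \<longlongrightarrow> L) (at_right 0) \<and>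
      (\<Sum>p\<in>P. hi s (idx p) - lo s (idx p)) \<le> L"
  proof (rule limit_lb[OF fin])
    show "\<forall>p\<in>P. lo s (idx p) \<le> hi s (idx p) \<and> {lo s (idx p)<..<hi s (idx p)} \<subseteq> {0..<2*pi} \<and>
     (\<forall>\<theta>. lo s (idx p) < \<theta> \<and> \<theta> < hi s (idx p) \<longrightarrow> (\<forall>q\<in>P. f q < f p \<longrightarrow> 0 < Re (p - q) * cos \<theta> + Im (p - q) * sin \<theta>))"
    proof
      fix p assume "p \<in> P"
      then obtain k where k: "k < n" "p = pt s k" unfolding P_def by auto
      have "lo s k \<le> hi s k" "{lo s k<..<hi s k} \<subseteq> {0..<2*pi}"
        using lo_hi[OF s, of k] by auto
      moreover have "0 < Re (pt s k - q) * cos \<theta> + Im (pt s k - q) * sin \<theta>"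
        if "lo s k < \<theta>" "\<theta> < hi s k" "q \<in> P" "f q < f (pt s k)" for \<theta> q
      proof -
        obtain k' where k': "k' < n" "q = pt s k'" using \<open>q \<in> P\<close> unfolding P_def by auto
        then have "k' < k" using that(4) k idx unfolding f_def by auto
        then show ?thesis using pt_dir[OF s _ that(1,2)] k' by simp
      qed
      ultimately show "lo s (idx p) \<le> hi s (idx p) \<and> {lo s (idx p)<..<hi s (idx p)} \<subseteq> {0..<2*pi} \<and>
       (\<forall>\<theta>. lo s (idx p) < \<theta> \<and> \<theta> < hi s (idx p) \<longrightarrow> (\<forall>q\<in>P. f q < f p \<longrightarrow> 0 < Re (p - q) * cos \<theta> + Im (p - q) * sin \<theta>))"
        using k idx by auto
    qed
  qed
  have "(\<Sum>p\<in>P. hi s (idx p) - lo s (idx p)) = (\<Sum>k<n. hi s k - lo s k)"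
    unfolding P_def using inj idx by (simp add: sum.reindex)
  then have lim': "\<exists>L. ((\<lambda>e. vis (scale_set e P) (scale_order e f)) \<longlongrightarrow> L) (at_right 0) \<and>
      real n powr (3/4) \<le> L" using lim tot by auto
  have dense: "dense 4 n P"
    unfolding dense_def
  proof (intro conjI fin card impI)
    assume n2: "2 \<le> n"
    define A where "A = {dist p q | p q. p \<in> P \<and> q \<in> P}"
    define B where "B = {dist p q | p q. p \<in> P \<and> q \<in> P \<and> p \<noteq> q}"
    have Aeq: "A = (\<lambda>(p,q). dist p q) ` (P \<times> P)" unfolding A_def by auto
    have Bsub: "B \<subseteq> A" unfolding A_def B_def by auto
    have finA: "finite A" unfolding Aeq using fin by simp
    have finB: "finite B" using finA Bsub by (rule rev_finite_subset)
    have p01: "pt s 0 \<in> P" "pt s 1 \<in> P" "pt s 0 \<noteq> pt s 1" using n2 pt_inj unfolding P_def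
      by (auto dest: injD)
    have neB: "B \<noteq> {}" unfolding B_def using p01 by blast
    have neA: "A \<noteq> {}" using neB Bsub by auto
    have Ale: "Max A \<le> 4 * sqrt (real n)"
    proof (rule Max.boundedI[OF finA neA])
      fix x assume "x \<in> A"
      then obtain k k' where "k < n" "k' < n" "x = dist (pt s k) (pt s k')" unfolding A_def P_def by auto
      then have "x \<le> sqrt ((DX s n)^2 + (DY s n)^2)" using dist_le[OF s] by simp
      also have "\<dots> \<le> sqrt (16 * real n)" using dens[OF n2] by simp
      also have "\<dots> = 4 * sqrt (real n)" by (simp add: real_sqrt_mult)
      finally show "x \<le> 4 * sqrt (real n)" .
    qed
    have Bge: "1 \<le> Min B"
    proof (rule Min.boundedI[OF finB neB])
      fix x assume "x \<in> B"
      then obtain k k' where "k < n" "k' < n" "x = dist (pt s k) (pt s k')" "pt s k \<noteq> pt s k'"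
        unfolding B_def P_def by auto
      then show "1 \<le> x" using dist_ge1 by metis
    qed
    have A0: "0 \<le> Max A" using neA finA unfolding Aeq by (auto simp: Max_ge_iff)
    have "Max A / Min B \<le> Max A / 1" using A0 Bge by (intro divide_left_mono) auto
    then show "Max {dist p q | p q. p \<in> P \<and> q \<in> P} / Min {dist p q | p q. p \<in> P \<and> q \<in> P \<and> p \<noteq> q}
        \<le> 4 * sqrt (real n)" using Ale unfolding A_def B_def by simp
  qed
  show ?thesis using dense so lim' by blast
qed



lemma div_cancel_aux: "(C::real) \<noteq> 0 \<Longrightarrow> (A/C)/(B/C) = A/B"
  by (cases "B = 0") (auto simp: divide_divide_eq_left divide_divide_eq_right)

lemma cc_eq: assumes "s \<ge> 1" shows "cc s = (4 * real s + 1) / (5 * (real s)^2 + 4 * real s + 4)"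
proof -
  define x where "x = real s"
  have x: "x > 0" using assms by (simp add: x_def)
  have d: "5 * x^2 + 4 * x + 4 > 0" using x by (simp add: add_pos_pos)
  have "cc s = (1/(4*x^2) + 1/x) / (1 + (1/2 + 1/x)^2)" by (simp add: cc_def aa_def x_def)
  also have "1/(4*x^2) + 1/x = (4*x+1)/(4*x^2)" using x by (simp add: field_simps power2_eq_square)
  also have "1 + (1/2 + 1/x)^2 = (5 * x^2 + 4 * x + 4)/(4*x^2)" using x by (simp add: field_simps power2_eq_square)
  also have "(4*x+1)/(4*x^2) / ((5 * x^2 + 4 * x + 4)/(4*x^2)) = (4*x+1)/(5 * x^2 + 4 * x + 4)"
    using x by (intro div_cancel_aux) simp
  finally show ?thesis by (simp add: x_def)
qed

lemma quart2: "0 \<le> 9/32 * t^4 - t^3 + (107/100*9 - 9/32*9::real)"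
proof -
  have "9/32 * t^4 - t^3 + (107/100*9 - 9/32*9::real) =
        9/32 * (t^2 - 16/9*t - 2)^2 + 17/72 * (t - 72/17)^2 + (107/100*9 - 9/32*9 - 9/8 - 72/17)"
    by (simp add: power2_eq_square power3_eq_cube power4_eq_xxxx algebra_simps)
  also have "\<dots> \<ge> 0" by (intro add_nonneg_nonneg mult_nonneg_nonneg) auto
  finally show ?thesis .
qed

definition Vb :: "nat \<Rightarrow> nat \<Rightarrow> real" where
  "Vb s n = (if n \<le> Wd s then 107/100 * real n else 107/100 * real (Wd s) + cc s * (real n - real (Wd s)))"

lemma small_case: assumes "real n = t^4" "1 \<le> t" "n \<le> Wd s" shows "t^3 \<le> Vb s n"
proof -
  have "t^3 * 1 \<le> t^3 * t" using assms(2) by (intro mult_left_mono) auto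
  then have "t^3 \<le> real n" using assms(1) by (simp add: power_Suc2 power3_eq_cube power4_eq_xxxx mult.assoc)
  then show ?thesis using assms(3) by (simp add: Vb_def)
qed

lemma regime2_tot: assumes "real n = t^4" "1 \<le> t" shows "t^3 \<le> Vb 2 n"
proof (cases "n \<le> Wd 2")
  case True then show ?thesis using small_case assms by blast
next
  case False
  have W: "Wd 2 = 9" by (simp add: Wd_def)
  have c: "cc 2 = 9/32" by (simp add: cc_eq)
  have "Vb 2 n = 107/100 * 9 + 9/32 * (t^4 - 9)" using False assms(1) by (simp add: Vb_def W c)
  also have "\<dots> = 9/32 * t^4 + (107/100*9 - 9/32*9)" by (simp add: field_simps)
  finally have "Vb 2 n = 9/32 * t^4 + (107/100*9 - 9/32*9)" .
  then show ?thesis using quart2[of t] by simp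
qed

lemma regime2_dens: assumes "real n = t^4" "1 \<le> t" "t < 4" "2 \<le> n"
  shows "(DX 2 n)^2 + (DY 2 n)^2 \<le> 16 * real n"
proof -
  have W: "Wd 2 = 9" by (simp add: Wd_def)
  have "t^4 < 4^4" using assms by (intro power_strict_mono) auto
  then have N: "real n < 256" using assms(1) by simp
  show ?thesis
  proof (cases "n \<le> 9")
    case True
    then have dy: "DY 2 n = 1" by (simp add: DY_def W)
    have dx: "DX 2 n = real n - 1" "DX 2 n \<le> 8" using True assms(4) by (auto simp: DX_def of_nat_diff)
    have "(DX 2 n)^2 \<le> 8 * DX 2 n" unfolding power2_eq_square using dx assms(4)
      by (intro mult_right_mono) auto
    then show ?thesis using dx dy by simp
  next
    case False
    then have dx: "DX 2 n = 8" by (simp add: DX_def)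
    have "real ((n - 1) div 9) \<le> real (n - 1) / 9" using of_nat_div_le_of_nat[of "n-1" 9] by simp
    then have dy: "DY 2 n \<le> (real n + 8) / 9" "0 \<le> DY 2 n" using assms(4)
      by (auto simp: DY_def W of_nat_diff)
    have "DY 2 n \<le> 30" using dy N by simp
    then have "(DY 2 n)^2 \<le> 30 * ((real n + 8) / 9)" unfolding power2_eq_square using dy
      by (intro mult_mono) auto
    then show ?thesis using dx False by simp
  qed
qed

lemma big_dens: assumes "real n = t^4" "4 \<le> t" "2 * real s - 2 \<le> t" "t / 2 < real s"
  shows "(DX s n)^2 + (DY s n)^2 \<le> 16 * real n"
proof -
  define x where "x = real s"
  have x0: "0 < x" using assms x_def by simp
  have xt: "x \<le> t" using assms unfolding x_def by simp
  have x2: "x^2 \<le> t^2" using xt x0 by (intro power_mono) auto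
  have x2b: "t^2 / 4 < x^2"
  proof -
    have "(t/2)^2 < x^2" using assms(2,4) unfolding x_def by (intro power_strict_mono) auto
    then show ?thesis by (simp add: power_divide)
  qed
  have "min (n - 1) (2 * s^2) \<le> 2 * s^2" by simp
  then have "real (min (n - 1) (2 * s^2)) \<le> real (2 * s^2)" by (simp only: of_nat_le_iff)
  then have dx: "DX s n \<le> 2 * x^2" "0 \<le> DX s n" by (auto simp: DX_def x_def)
  have "(DX s n)^2 \<le> (2 * x^2)^2" using dx by (intro power_mono) auto
  also have "\<dots> \<le> (2 * t^2)^2" using x2 x0 by (intro power_mono) auto
  finally have dx2: "(DX s n)^2 \<le> 4 * t^4" by (simp add: power_mult_distrib power2_eq_square power4_eq_xxxx)
  have "real ((n - 1) div Wd s) \<le> real (n - 1) / real (Wd s)" by (rule of_nat_div_le_of_nat)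
  also have "\<dots> \<le> real n / (2 * x^2)"
    using x0 by (intro frac_le) (auto simp: Wd_def x_def)
  also have "\<dots> \<le> t^4 / (2 * (t^2/4))"
    unfolding assms(1) using x2b assms(2) x0 by (intro divide_left_mono mult_left_mono) auto
  also have "\<dots> = 2 * t^2" using assms(2) by (simp add: field_simps power2_eq_square power4_eq_xxxx)
  finally have "real ((n - 1) div Wd s) \<le> 2 * t^2" .
  then have dy: "DY s n \<le> 9/4 * t^2" "0 \<le> DY s n" using x2 by (auto simp: DY_def x_def)
  have "(DY s n)^2 \<le> (9/4 * t^2)^2" using dy by (intro power_mono) auto
  then have dy2: "(DY s n)^2 \<le> 81/16 * t^4" by (simp add: power_mult_distrib power2_eq_square power4_eq_xxxx)
  have "0 \<le> t^4" using assms by simp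
  then show ?thesis using dx2 dy2 assms(1) by simp
qed

lemma regime3_tot: assumes "real n = t^4" "4 \<le> t" shows "t^3 \<le> Vb 3 n"
proof -
  have W: "Wd 3 = 19" by (simp add: Wd_def)
  have c: "cc 3 = 13/61" by (simp add: cc_eq)
  have "4^4 \<le> t^4" using assms by (intro power_mono) auto
  then have "\<not> n \<le> Wd 3" using assms(1) W by auto
  then have V: "Vb 3 n = 107/100*19 + 13/61 * (t^4 - 19)" using assms(1) by (simp add: Vb_def W c)
  have t3: "0 \<le> t^3" using assms by simp
  have "t^3 - 13/61 * t^4 \<le> 33489/2197"
  proof (cases "61/13 \<le> t")
    case True
    have "t^3 * 1 \<le> t^3 * (13/61 * t)" using True t3 by (intro mult_left_mono) auto
    then show ?thesis by (simp add: power_Suc2 power3_eq_cube power4_eq_xxxx algebra_simps)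
  next
    case False
    have "t^3 \<le> (61/13)^3" using False assms by (intro power_mono) auto
    moreover have "1 - 13/61 * t \<le> 9/61" using assms by simp
    moreover have "0 \<le> 1 - 13/61 * t" using False by simp
    ultimately have "t^3 * (1 - 13/61 * t) \<le> (61/13)^3 * (9/61)" using t3 by (intro mult_mono) auto
    then show ?thesis by (simp add: power_Suc2 power3_eq_cube power4_eq_xxxx algebra_simps)
  qed
  moreover have "107/100*19 + 13/61*(t^4 - 19) = (107/100*19 - 13/61*19) + 13/61 * t^4"
    by (simp add: field_simps)
  moreover have "(33489/2197::real) \<le> 107/100*19 - 13/61*19" by simp
  ultimately show ?thesis unfolding V by linarith
qed

lemma big_tot: assumes "real n = t^4" "1 \<le> t" "4 \<le> s" "2 * real s - 2 \<le> t"
  shows "t^3 \<le> Vb s n"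
proof (cases "n \<le> Wd s")
  case True then show ?thesis using small_case assms by blast
next
  case False
  define x where "x = real s"
  have x4: "4 \<le> x" using assms by (simp add: x_def)
  have dpos: "0 < 5 * x^2 + 4 * x + 4" using x4 by (simp add: add_pos_pos)
  have c: "cc s = (4 * x + 1) / (5 * x^2 + 4 * x + 4)" using assms by (simp add: cc_eq x_def)
  have c0: "0 \<le> cc s" unfolding c using x4 dpos by simp
  have c1: "cc s \<le> 1" unfolding c using dpos x4 by (simp add: divide_le_eq_1)
  have "5 * x^2 + 4 * x + 4 \<le> (4 * x + 1) * (2 * x - 2)"
  proof -
    have h: "4 * x \<le> x * x" using x4 by (intro mult_right_mono) auto
    have "(4 * x + 1) * (2 * x - 2) - (5 * x^2 + 4 * x + 4) = 3 * (x * x) - 10 * x - 6"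
      by (simp add: power2_eq_square algebra_simps)
    then show ?thesis using h x4 by linarith
  qed
  then have "1 \<le> cc s * (2 * x - 2)" unfolding c using dpos by (simp add: field_simps)
  also have "\<dots> \<le> cc s * t" using assms c0 by (intro mult_left_mono) (auto simp: x_def)
  finally have ct: "1 \<le> cc s * t" .
  have "t^3 * 1 \<le> t^3 * (cc s * t)" using ct assms by (intro mult_left_mono) auto
  then have "t^3 \<le> cc s * real n" using assms(1) by (simp add: power_Suc2 power3_eq_cube power4_eq_xxxx algebra_simps)
  moreover have "cc s * real (Wd s) \<le> 107/100 * real (Wd s)" using c1 by (intro mult_right_mono) auto
  ultimately show ?thesis using False by (simp add: Vb_def algebra_simps)
qed

theorem theorem3:
  fixes n :: nat
  assumes "n \<ge> 1"
  shows "\<exists>P f. dense 4 n P \<and> stacking_order P f \<and>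
           (\<exists>L. ((\<lambda>\<epsilon>. vis (scale_set \<epsilon> P) (scale_order \<epsilon> f)) \<longlongrightarrow> L) (at_right 0)
                \<and> L \<ge> real n powr (3/4))"
proof -
  define t where "t = real n powr (1/4)"
  have npos: "0 < real n" using assms by simp
  have t4: "real n = t^4"
    unfolding t_def using powr_power[of "real n" "1/4" 4] npos by simp
  have t3: "real n powr (3/4) = t^3"
    unfolding t_def using powr_power[of "real n" "1/4" 3] npos by simp
  have t1: "1 \<le> t" unfolding t_def using assms by (intro ge_one_powr_ge_zero) auto
  define s where "s = max 2 (nat \<lfloor>t/2\<rfloor> + 1)"
  have fl0: "0 \<le> \<lfloor>t/2\<rfloor>" using t1 by simp
  have rs: "real (nat \<lfloor>t/2\<rfloor> + 1) = of_int \<lfloor>t/2\<rfloor> + 1" using fl0 by simp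
  have half: "t/2 < real s"
  proof -
    have "t/2 < of_int \<lfloor>t/2\<rfloor> + 1" by linarith
    also have "\<dots> \<le> real s" unfolding s_def using rs by (metis max.cobounded2 of_nat_le_iff)
    finally show ?thesis .
  qed
  have s2: "s \<ge> 2" unfolding s_def by simp
  then have s1: "s \<ge> 1" by simp
  have main: "(2 \<le> n \<longrightarrow> (DX s n)^2 + (DY s n)^2 \<le> 16 * real n) \<and> t^3 \<le> Vb s n"
  proof (cases "s = 2")
    case True
    then have "nat \<lfloor>t/2\<rfloor> + 1 \<le> 2" unfolding s_def by simp
    then have "\<lfloor>t/2\<rfloor> \<le> 1" by linarith
    then have "t < 4" by linarith
    then show ?thesis using True regime2_dens[OF t4 t1] regime2_tot[OF t4 t1] by simp
  next
    case False
    then have se: "s = nat \<lfloor>t/2\<rfloor> + 1" "s \<ge> 3" unfolding s_def using s2 by (auto simp: max_def split: if_splits)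
    have low: "2 * real s - 2 \<le> t" using se rs by (metis add_diff_cancel_right' of_int_floor_le mult.commute le_divide_eq_numeral1(1) left_diff_distrib' mult.right_neutral )
    have t4': "4 \<le> t" using low se(2) by linarith
    have d: "(DX s n)^2 + (DY s n)^2 \<le> 16 * real n" by (rule big_dens[OF t4 t4' low half])
    show ?thesis
    proof (cases "s = 3")
      case True
      then show ?thesis using d regime3_tot[OF t4 t4'] by simp
    next
      case False
      then have "s \<ge> 4" using se by simp
      then show ?thesis using d big_tot[OF t4 t1 _ low] by simp
    qed
  qed
  show ?thesis
  proof (rule config[OF s1 assms])
    show "2 \<le> n \<Longrightarrow> (DX s n)^2 + (DY s n)^2 \<le> 16 * real n" using main by simp
    have "real n powr (3/4) \<le> Vb s n" using main t3 by simp
    also have "\<dots> \<le> (\<Sum>k<n. hi s k - lo s k)" unfolding Vb_def by (rule sum_lb[OF s1])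
    finally show "real n powr (3/4) \<le> (\<Sum>k<n. hi s k - lo s k)" .
  qed
qed

end
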